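(* Let $R$ be a ring of the standard form below, $\omega$ its normalized homogeneous weight and $\mathcal P_{\rm hom}$ the induced partition. Then: (a) $\omega(a)\neq1$ for all $a\in\mathrm{soc}(R)$, so if $R\neq\mathrm{soc}(R)$ then $R\setminus\mathrm{soc}(R)$ is a block of $\mathcal P_{\rm hom}$; (b) there exists a nonzero $a\in R$ with $\omega(a)=0$ if and only if there is an index $i\in\{1,\dots,t\}$ with $q_i=2$ and $n_i\ge2$; and in this case $\mathcal P_{\rm hom}$ is not reflexive.
   Context: Standard form: $R=R_1\times\cdots\times R_t$ with $R_i=R_{i,1}\times\cdots\times R_{i,n_i}$, where each $R_{i,j}$ is a finite local Frobenius ring with $|R_{i,j}/\mathrm{rad}(R_{i,j})|=|\mathrm{soc}(R_{i,j})|=q_i$ for all $j$, and $q_1,\dots,q_t$ distinct ($\mathrm{rad}$ = Jacobson radical, $\mathrm{soc}$ = socle; a finite ring is Frobenius if it admits a generating character, i.e. a character $\chi$ of its additive group such that $r\mapsto(x\mapsto\chi(xr))$ is a bijection onto the character group). The normalized homogeneous weight on $R$ is the unique $\omega:R\to\mathbb Q$ with $\omega(0)=0$, $\omega(x)=\omega(y)$ whenever $Rx=Ry$, and $\sum_{y\in Rx}\omega(y)=|Rx|$ for $x\ne0$; $\mathcal P_{\rm hom}$ is the partition of $R$ into sets of elements of equal weight. For a partition $\mathcal P$ of $R$ and a generating character $\chi$, the right $\chi$-dual partition is given by $a\sim a'$ iff $\sum_{b\in P}\chi(ab)=\sum_{b\in P}\chi(a'b)$ for all blocks $P$; $\mathcal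 P$ is reflexive if the left $\chi$-dual of its right $\chi$-dual equals $\mathcal P$ (left dual: use $\chi(ba)$), equivalently if $\mathcal P$ and its right $\chi$-dual have the same number of blocks. *)

theory Defs
  imports Complex_Main "HOL-Algebra.Ring" "HOL-Algebra.AbelCoset"
begin

definition prod_ring :: "'i set \<Rightarrow> ('i \<Rightarrow> 'a ring) \<Rightarrow> ('i \<Rightarrow> 'a) ring" where
  "prod_ring I S =
     \<lparr> carrier = PiE I (\<lambda>k. carrier (S k)),
       mult = (\<lambda>x y. \<lambda>k\<in>I. x k \<otimes>\<^bsub>S k\<^esub> y k),
       one = (\<lambda>k\<in>I. \<one>\<^bsub>S k\<^esub>),
       zero = (\<lambda>k\<in>I. \<zero>\<^bsub>S k\<^esub>),
       add = (\<lambda>x y. \<lambda>k\<in>I. x k \<oplus>\<^bsub>S k\<^esub> y k) \<rparr>"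

definition left_ideal :: "('a, 'm) ring_scheme \<Rightarrow> 'a set \<Rightarrow> bool" where
  "left_ideal R L \<longleftrightarrow> additive_subgroup L R \<and>
     (\<forall>r\<in>carrier R. \<forall>x\<in>L. r \<otimes>\<^bsub>R\<^esub> x \<in> L)"

definition maximal_left_ideal :: "('a, 'm) ring_scheme \<Rightarrow> 'a set \<Rightarrow> bool" where
  "maximal_left_ideal R M \<longleftrightarrow> left_ideal R M \<and> M \<noteq> carrier R \<and>
     (\<forall>L. left_ideal R L \<and> M \<subseteq> L \<longrightarrow> L = M \<or> L = carrier R)"

definition minimal_left_ideal :: "('a, 'm) ring_scheme \<Rightarrow> 'a set \<Rightarrow> bool" where
  "minimal_left_ideal R N \<longleftrightarrow> left_ideal R N \<and> N \<noteq> {\<zero>\<^bsub>R\<^esub>} \<and>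
     (\<forall>L. left_ideal R L \<and> L \<subseteq> N \<longrightarrow> L = {\<zero>\<^bsub>R\<^esub>} \<or> L = N)"

definition jac_rad :: "('a, 'm) ring_scheme \<Rightarrow> 'a set" where
  "jac_rad R = {x \<in> carrier R. \<forall>M. maximal_left_ideal R M \<longrightarrow> x \<in> M}"

text \<open>(Left) socle: sum of all minimal left ideals, i.e. the smallest left ideal
  containing all of them.\<close>
definition socle :: "('a, 'm) ring_scheme \<Rightarrow> 'a set" where
  "socle R = \<Inter> {L. left_ideal R L \<and> (\<forall>N. minimal_left_ideal R N \<longrightarrow> N \<subseteq> L)}"

definition local_ring :: "('a, 'm) ring_scheme \<Rightarrow> bool" where
  "local_ring R \<longleftrightarrow> ring R \<and> (\<exists>!M. maximal_left_ideal R M)"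

definition quot_card :: "('a, 'm) ring_scheme \<Rightarrow> 'a set \<Rightarrow> nat" where
  "quot_card R J = card ((\<lambda>x. (\<lambda>j. x \<oplus>\<^bsub>R\<^esub> j) ` J) ` carrier R)"

definition add_chars :: "('a, 'm) ring_scheme \<Rightarrow> ('a \<Rightarrow> complex) set" where
  "add_chars R = {\<chi> \<in> extensional (carrier R).
      (\<forall>x\<in>carrier R. \<chi> x \<noteq> 0) \<and>
      (\<forall>x\<in>carrier R. \<forall>y\<in>carrier R. \<chi> (x \<oplus>\<^bsub>R\<^esub> y) = \<chi> x * \<chi> y)}"

definition generating_char :: "('a, 'm) ring_scheme \<Rightarrow> ('a \<Rightarrow> complex) \<Rightarrow> bool" where
  "generating_char R \<chi> \<longleftrightarrow> \<chi> \<in> add_chars R \<and>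
     bij_betw (\<lambda>r. \<lambda>x\<in>carrier R. \<chi> (x \<otimes>\<^bsub>R\<^esub> r)) (carrier R) (add_chars R)"

definition frobenius_ring :: "('a, 'm) ring_scheme \<Rightarrow> bool" where
  "frobenius_ring R \<longleftrightarrow> ring R \<and> finite (carrier R) \<and> (\<exists>\<chi>. generating_char R \<chi>)"

definition left_principal :: "('a, 'm) ring_scheme \<Rightarrow> 'a \<Rightarrow> 'a set" where
  "left_principal R x = (\<lambda>r. r \<otimes>\<^bsub>R\<^esub> x) ` carrier R"

definition normalized_hom_weight :: "('a, 'm) ring_scheme \<Rightarrow> ('a \<Rightarrow> rat) \<Rightarrow> bool" where
  "normalized_hom_weight R \<omega> \<longleftrightarrow>
     \<omega> \<zero>\<^bsub>R\<^esub> = 0 \<and>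
     (\<forall>x\<in>carrier R. \<forall>y\<in>carrier R. left_principal R x = left_principal R y \<longrightarrow> \<omega> x = \<omega> y) \<and>
     (\<forall>x\<in>carrier R. x \<noteq> \<zero>\<^bsub>R\<^esub> \<longrightarrow>
        (\<Sum>y\<in>left_principal R x. \<omega> y) = of_nat (card (left_principal R x)))"

definition level_partition :: "('a, 'm) ring_scheme \<Rightarrow> ('a \<Rightarrow> 'b) \<Rightarrow> 'a set set" where
  "level_partition R f = (\<lambda>x. {y \<in> carrier R. f y = f x}) ` carrier R"

definition right_dual :: "('a, 'm) ring_scheme \<Rightarrow> ('a \<Rightarrow> complex) \<Rightarrow> 'a set set \<Rightarrow> 'a set set" where
  "right_dual R \<chi> P = (\<lambda>a. {a' \<in> carrier R. \<forall>B\<in>P.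
        (\<Sum>b\<in>B. \<chi> (a \<otimes>\<^bsub>R\<^esub> b)) = (\<Sum>b\<in>B. \<chi> (a' \<otimes>\<^bsub>R\<^esub> b))}) ` carrier R"

definition left_dual :: "('a, 'm) ring_scheme \<Rightarrow> ('a \<Rightarrow> complex) \<Rightarrow> 'a set set \<Rightarrow> 'a set set" where
  "left_dual R \<chi> P = (\<lambda>a. {a' \<in> carrier R. \<forall>B\<in>P.
        (\<Sum>b\<in>B. \<chi> (b \<otimes>\<^bsub>R\<^esub> a)) = (\<Sum>b\<in>B. \<chi> (b \<otimes>\<^bsub>R\<^esub> a'))}) ` carrier R"

definition reflexive_partition :: "('a, 'm) ring_scheme \<Rightarrow> ('a \<Rightarrow> complex) \<Rightarrow> 'a set set \<Rightarrow> bool" where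
  "reflexive_partition R \<chi> P \<longleftrightarrow> left_dual R \<chi> (right_dual R \<chi> P) = P"

end

theory Submission
  imports Defs
begin

lemma (in ring) left_idealI:
  assumes "L \<subseteq> carrier R" "\<zero> \<in> L"
    "\<And>a b. a \<in> L \<Longrightarrow> b \<in> L \<Longrightarrow> a \<oplus> b \<in> L"
    "\<And>a. a \<in> L \<Longrightarrow> \<ominus> a \<in> L"
    "\<And>r a. r \<in> carrier R \<Longrightarrow> a \<in> L \<Longrightarrow> r \<otimes> a \<in> L"
  shows "left_ideal R L"
proof -
  have "subgroup L (add_monoid R)"
    apply (rule add.subgroupI)
    using assms by (auto simp: a_inv_def)
  then show ?thesis unfolding left_ideal_def using assms(5) by (auto intro: additive_subgroupI)
qed

lemma left_idealD:
  assumes "left_ideal R L"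
  shows "L \<subseteq> carrier R" "\<zero>\<^bsub>R\<^esub> \<in> L"
    "\<And>a b. a \<in> L \<Longrightarrow> b \<in> L \<Longrightarrow> a \<oplus>\<^bsub>R\<^esub> b \<in> L"
    "\<And>a. a \<in> L \<Longrightarrow> \<ominus>\<^bsub>R\<^esub> a \<in> L"
    "\<And>r a. r \<in> carrier R \<Longrightarrow> a \<in> L \<Longrightarrow> r \<otimes>\<^bsub>R\<^esub> a \<in> L"
  using assms unfolding left_ideal_def
  by (auto simp: additive_subgroup.a_subset additive_subgroup.a_closed additive_subgroup.zero_closed
       additive_subgroup.a_inv_closed)

context ring begin

lemma lp_subset: "x \<in> carrier R \<Longrightarrow> left_principal R x \<subseteq> carrier R"
  unfolding left_principal_def by auto

lemma lp_self: "x \<in> carrier R \<Longrightarrow> x \<in> left_principal R x"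
  unfolding left_principal_def by (rule image_eqI[of _ _ \<one>]) auto

lemma lp_ideal: "x \<in> carrier R \<Longrightarrow> left_ideal R (left_principal R x)"
proof (rule left_idealI)
  assume x: "x \<in> carrier R"
  show "left_principal R x \<subseteq> carrier R" using lp_subset x .
  show "\<zero> \<in> left_principal R x" unfolding left_principal_def
    by (rule image_eqI[of _ _ \<zero>]) (use x in auto)
  fix a b assume "a \<in> left_principal R x" "b \<in> left_principal R x"
  then obtain r s where "r \<in> carrier R" "s \<in> carrier R" "a = r \<otimes> x" "b = s \<otimes> x"
    unfolding left_principal_def by auto
  then show "a \<oplus> b \<in> left_principal R x" unfolding left_principal_def
    by (intro image_eqI[of _ _ "r \<oplus> s"]) (use x in \<open>auto simp: l_distr\<close>)
next
  fix a assume x: "x \<in> carrier R" and "a \<in> left_principal R x"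
  then obtain r where "r \<in> carrier R" "a = r \<otimes> x"
    unfolding left_principal_def by auto
  then show "\<ominus> a \<in> left_principal R x" unfolding left_principal_def
    by (intro image_eqI[of _ _ "\<ominus> r"]) (use x in \<open>auto simp: l_minus\<close>)
next
  fix a t assume x: "x \<in> carrier R" and "a \<in> left_principal R x" "t \<in> carrier R"
  then obtain r where "r \<in> carrier R" "a = r \<otimes> x"
    unfolding left_principal_def by auto
  then show "t \<otimes> a \<in> left_principal R x" unfolding left_principal_def
    by (intro image_eqI[of _ _ "t \<otimes> r"]) (use x \<open>t \<in> carrier R\<close> in \<open>auto simp: m_assoc\<close>)
qed

lemma lp_le: "left_ideal R L \<Longrightarrow> x \<in> L \<Longrightarrow> left_principal R x \<subseteq> L"
  unfolding left_principal_def using left_idealD(5)[of R L _ x] by blast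

lemma carrier_ideal: "left_ideal R (carrier R)"
  by (rule left_idealI) auto

lemma lp_zero: "left_principal R \<zero> = {\<zero>}"
  unfolding left_principal_def by auto

lemma lp_eq_zero: "x \<in> carrier R \<Longrightarrow> left_principal R x = {\<zero>} \<Longrightarrow> x = \<zero>"
  using lp_self by blast

lemma exists_minimal:
  assumes fin: "finite (carrier R)" and L: "left_ideal R L" "L \<noteq> {\<zero>}"
  shows "\<exists>N. minimal_left_ideal R N \<and> N \<subseteq> L"
proof -
  define F where "F = {L'. left_ideal R L' \<and> L' \<subseteq> L \<and> L' \<noteq> {\<zero>}}"
  have "L \<in> F" using L unfolding F_def by auto
  then have "\<exists>n. \<exists>L'\<in>F. card L' = n" by blast
  define n where "n = (LEAST n. \<exists>L'\<in>F. card L' = n)"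
  from LeastI_ex[OF \<open>\<exists>n. \<exists>L'\<in>F. card L' = n\<close>] obtain N where N: "N \<in> F" "card N = n"
    unfolding n_def by blast
  have least: "card N \<le> card L'" if "L' \<in> F" for L'
    using that N(2) unfolding n_def by (auto intro: Least_le)
  have "minimal_left_ideal R N"
    unfolding minimal_left_ideal_def
  proof (intro conjI allI impI)
    show "left_ideal R N" "N \<noteq> {\<zero>}" using N unfolding F_def by auto
    fix L' assume L': "left_ideal R L' \<and> L' \<subseteq> N"
    show "L' = {\<zero>} \<or> L' = N"
    proof (cases "L' = {\<zero>}")
      case False
      then have "L' \<in> F" using L' N unfolding F_def by auto
      then have "card N \<le> card L'" by (rule least)
      moreover have "N \<subseteq> carrier R" using N left_idealD(1)[of R N] unfolding F_def by auto
      then have "finite N" using fin by (rule finite_subset)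
      ultimately show ?thesis using L' by (meson card_seteq)
    qed simp
  qed
  moreover have "N \<subseteq> L" using N unfolding F_def by blast
  ultimately show ?thesis by blast
qed

end

lemma card_image_fibres:
  assumes "\<And>r s. r \<in> C \<Longrightarrow> s \<in> C \<Longrightarrow> g r = g s \<longleftrightarrow> h r = h s"
  shows "card (g ` C) = card (h ` C)"
proof -
  define \<phi> where "\<phi> y = g (inv_into C h y)" for y
  have phi: "\<phi> (h r) = g r" if "r \<in> C" for r
  proof -
    have "inv_into C h (h r) \<in> C" "h (inv_into C h (h r)) = h r"
      using that by (auto intro: inv_into_into f_inv_into_f)
    then show ?thesis unfolding \<phi>_def using assms that by blast
  qed
  have "g ` C = \<phi> ` (h ` C)" using phi by (auto simp: image_image)
  moreover have "inj_on \<phi> (h ` C)"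
    by (auto simp: inj_on_def phi assms)
  ultimately show ?thesis by (simp add: card_image)
qed

context ring begin

lemma jac_rad_local:
  assumes "maximal_left_ideal R M" "\<And>M'. maximal_left_ideal R M' \<Longrightarrow> M' = M"
  shows "jac_rad R = M"
proof -
  have "M \<subseteq> carrier R" using assms(1) left_idealD(1) unfolding maximal_left_ideal_def by blast
  then show ?thesis unfolding jac_rad_def using assms by blast
qed

lemma minimal_card:
  assumes fin: "finite (carrier R)" and M: "maximal_left_ideal R M"
    and uniq: "\<And>M'. maximal_left_ideal R M' \<Longrightarrow> M' = M"
    and N: "minimal_left_ideal R N"
  shows "card N = quot_card R (jac_rad R)"
proof -
  have NI: "left_ideal R N" and N0: "N \<noteq> {\<zero>}"
    and Nmin: "\<And>L. left_ideal R L \<Longrightarrow> L \<subseteq> N \<Longrightarrow> L = {\<zero>} \<or> L = N"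
    using N unfolding minimal_left_ideal_def by auto
  have Nsub: "N \<subseteq> carrier R" using left_idealD(1)[OF NI] .
  have "\<zero> \<in> N" using left_idealD(2)[OF NI] .
  with N0 obtain x where xN: "x \<in> N" and x0: "x \<noteq> \<zero>" by blast
  have x: "x \<in> carrier R" using xN Nsub by blast
  have lpN: "left_principal R x = N"
  proof -
    have "left_principal R x \<subseteq> N" using lp_le[OF NI xN] .
    moreover have "left_principal R x \<noteq> {\<zero>}" using lp_self[OF x] x0 by blast
    ultimately show ?thesis using Nmin lp_ideal[OF x] by blast
  qed
  define K where "K = {r \<in> carrier R. r \<otimes> x = \<zero>}"
  have KI: "left_ideal R K"
  proof (rule left_idealI)
    show "K \<subseteq> carrier R" unfolding K_def by blast
    show "\<zero> \<in> K" unfolding K_def using x by simp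
    fix a b assume "a \<in> K" "b \<in> K" then show "a \<oplus> b \<in> K"
      unfolding K_def using x by (simp add: l_distr)
  next
    fix a assume "a \<in> K" then show "\<ominus> a \<in> K"
      unfolding K_def using x by (simp add: l_minus)
  next
    fix r a assume "r \<in> carrier R" "a \<in> K" then show "r \<otimes> a \<in> K"
      unfolding K_def using x by (simp add: m_assoc)
  qed
  have Kmax: "maximal_left_ideal R K"
    unfolding maximal_left_ideal_def
  proof (intro conjI allI impI)
    show "left_ideal R K" by (rule KI)
    show "K \<noteq> carrier R"
    proof
      assume "K = carrier R"
      then have "\<one> \<otimes> x = \<zero>" unfolding K_def using one_closed by blast
      then show False using x x0 by simp
    qed
    fix L assume L: "left_ideal R L \<and> K \<subseteq> L"
    have Lsub: "L \<subseteq> carrier R" using L left_idealD(1) by blast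
    define Lx where "Lx = (\<lambda>l. l \<otimes> x) ` L"
    have LxI: "left_ideal R Lx"
    proof (rule left_idealI)
      show "Lx \<subseteq> carrier R" unfolding Lx_def using Lsub x by auto
      show "\<zero> \<in> Lx" unfolding Lx_def using x left_idealD(2)[of R L] L
        by (intro image_eqI[of _ _ \<zero>]) auto
      fix a b assume "a \<in> Lx" "b \<in> Lx"
      then obtain l l' where "l \<in> L" "l' \<in> L" "a = l \<otimes> x" "b = l' \<otimes> x" unfolding Lx_def by blast
      moreover have "l \<in> carrier R" "l' \<in> carrier R" using calculation Lsub by auto
      ultimately show "a \<oplus> b \<in> Lx" unfolding Lx_def using x Lsub left_idealD(3)[of R L l l'] L
        by (intro image_eqI[of _ _ "l \<oplus> l'"]) (auto simp: l_distr)
    next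
      fix a assume "a \<in> Lx"
      then obtain l where "l \<in> L" "a = l \<otimes> x" unfolding Lx_def by blast
      moreover have "l \<in> carrier R" using calculation Lsub by auto
      ultimately show "\<ominus> a \<in> Lx" unfolding Lx_def using x Lsub left_idealD(4)[of R L l] L
        by (intro image_eqI[of _ _ "\<ominus> l"]) (auto simp: l_minus)
    next
      fix r a assume r: "r \<in> carrier R" and "a \<in> Lx"
      then obtain l where "l \<in> L" "a = l \<otimes> x" unfolding Lx_def by blast
      moreover have "l \<in> carrier R" using calculation Lsub by auto
      ultimately show "r \<otimes> a \<in> Lx" unfolding Lx_def using x r Lsub left_idealD(5)[of R L r l] L
        by (intro image_eqI[of _ _ "r \<otimes> l"]) (auto simp: m_assoc)
    qed
    have "Lx \<subseteq> N" unfolding Lx_def using Lsub xN left_idealD(5)[OF NI] by auto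
    then have "Lx = {\<zero>} \<or> Lx = N" using Nmin LxI by blast
    then show "L = K \<or> L = carrier R"
    proof
      assume "Lx = {\<zero>}"
      then have "L \<subseteq> K" unfolding Lx_def K_def using Lsub by auto
      then show ?thesis using L by blast
    next
      assume "Lx = N"
      then obtain l where l: "l \<in> L" "x = l \<otimes> x" using xN unfolding Lx_def by blast
      have lc: "l \<in> carrier R" using l Lsub by blast
      have "r \<in> L" if r: "r \<in> carrier R" for r
      proof -
        have "(r \<ominus> r \<otimes> l) \<otimes> x = r \<otimes> x \<ominus> r \<otimes> (l \<otimes> x)"
          using r lc x by (simp add: a_minus_def l_distr l_minus m_assoc)
        also have "\<dots> = \<zero>" using l(2)[symmetric] r x by (simp add: a_minus_def r_neg) 
        finally have "r \<ominus> r \<otimes> l \<in> K" unfolding K_def using r lc by simp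
        then have "r \<ominus> r \<otimes> l \<in> L" using L by blast
        moreover have "r \<otimes> l \<in> L" using left_idealD(5)[of R L r l] L r l by blast
        ultimately have "(r \<ominus> r \<otimes> l) \<oplus> r \<otimes> l \<in> L" using left_idealD(3)[of R L] L by blast
        moreover have "(r \<ominus> r \<otimes> l) \<oplus> r \<otimes> l = r" using r lc
          by (simp add: a_minus_def a_assoc l_neg)
        ultimately show ?thesis by simp
      qed
      then show ?thesis using Lsub by blast
    qed
  qed
  then have KM: "K = M" using uniq by blast
  have MI: "left_ideal R M" using M unfolding maximal_left_ideal_def by blast
  have "card N = card ((\<lambda>r. r \<otimes> x) ` carrier R)" using lpN unfolding left_principal_def by simp
  also have "\<dots> = card ((\<lambda>r. (\<lambda>j. r \<oplus> j) ` M) ` carrier R)"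
  proof (rule card_image_fibres[symmetric])
    fix r s assume r: "r \<in> carrier R" and s: "s \<in> carrier R"
    have Msub: "M \<subseteq> carrier R" using left_idealD(1)[OF MI] .
    show "((\<oplus>) r ` M = (\<oplus>) s ` M) = (r \<otimes> x = s \<otimes> x)"
    proof
      assume eq: "(\<oplus>) r ` M = (\<oplus>) s ` M"
      have "r \<in> (\<oplus>) r ` M" using r left_idealD(2)[OF MI] by (intro image_eqI[of _ _ \<zero>]) auto
      then obtain j where j: "j \<in> M" "r = s \<oplus> j" using eq by auto
      then have "j \<otimes> x = \<zero>" using KM unfolding K_def by blast
      then show "r \<otimes> x = s \<otimes> x" using j s x Msub by (auto simp: l_distr)
    next
      assume eq: "r \<otimes> x = s \<otimes> x"
      have "(r \<ominus> s) \<otimes> x = \<zero>" using r s x eq by (simp add: a_minus_def l_distr l_minus r_neg)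
      then have d: "r \<ominus> s \<in> M" using KM r s unfolding K_def by (auto simp: minus_closed)
      then have d': "\<ominus> (r \<ominus> s) \<in> M" using left_idealD(4)[OF MI] by blast
      show "(\<oplus>) r ` M = (\<oplus>) s ` M"
      proof
        show "(\<oplus>) r ` M \<subseteq> (\<oplus>) s ` M"
        proof
          fix y assume "y \<in> (\<oplus>) r ` M"
          then obtain j where j: "j \<in> M" "y = r \<oplus> j" by auto
          have "(r \<ominus> s) \<oplus> j \<in> M" using left_idealD(3)[OF MI d j(1)] .
          moreover have "y = s \<oplus> ((r \<ominus> s) \<oplus> j)"
          proof -
            have jc: "j \<in> carrier R" using j Msub by blast
            have "s \<oplus> ((r \<ominus> s) \<oplus> j) = (s \<oplus> \<ominus> s) \<oplus> (r \<oplus> j)"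
              using jc r s by (simp add: a_minus_def a_ac)
            then show ?thesis using jc r s j by (simp add: r_neg)
          qed
          ultimately show "y \<in> (\<oplus>) s ` M" by blast
        qed
      next
        show "(\<oplus>) s ` M \<subseteq> (\<oplus>) r ` M"
        proof
          fix y assume "y \<in> (\<oplus>) s ` M"
          then obtain j where j: "j \<in> M" "y = s \<oplus> j" by auto
          have "\<ominus> (r \<ominus> s) \<oplus> j \<in> M" using left_idealD(3)[OF MI d' j(1)] .
          moreover have "y = r \<oplus> (\<ominus> (r \<ominus> s) \<oplus> j)"
          proof -
            have jc: "j \<in> carrier R" using j Msub by blast
            have "r \<oplus> (\<ominus> (r \<ominus> s) \<oplus> j) = (r \<oplus> \<ominus> r) \<oplus> (s \<oplus> j)"
              using jc r s by (simp add: a_minus_def a_ac minus_add)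
            then show ?thesis using jc r s j by (simp add: r_neg)
          qed
          ultimately show "y \<in> (\<oplus>) r ` M" by blast
        qed
      qed
    qed
  qed
  also have "\<dots> = quot_card R (jac_rad R)"
    using jac_rad_local[OF M uniq] unfolding quot_card_def by simp
  finally show ?thesis .
qed

end

context ring begin

lemma local_soc:
  assumes fin: "finite (carrier R)" and loc: "\<exists>!M. maximal_left_ideal R M"
    and q: "quot_card R (jac_rad R) = card (socle R)"
  shows "minimal_left_ideal R (socle R)"
    and "\<And>N. minimal_left_ideal R N \<Longrightarrow> N = socle R"
    and "\<And>x. x \<in> carrier R \<Longrightarrow> x \<noteq> \<zero> \<Longrightarrow> socle R \<subseteq> left_principal R x"
    and "\<And>x. x \<in> socle R \<Longrightarrow> x \<noteq> \<zero> \<Longrightarrow> left_principal R x = socle R"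
    and "card (socle R) \<ge> 2"
    and "socle R \<subseteq> carrier R" "\<zero> \<in> socle R" "left_ideal R (socle R)"
proof -
  obtain M where M: "maximal_left_ideal R M" and uniq: "\<And>M'. maximal_left_ideal R M' \<Longrightarrow> M' = M"
    using loc by blast
  have socsub: "socle R \<subseteq> carrier R"
    unfolding socle_def using carrier_ideal left_idealD(1) unfolding minimal_left_ideal_def by (intro Inter_lower) blast
  have finsoc: "finite (socle R)" using finite_subset[OF socsub fin] .
  have minle: "N \<subseteq> socle R" if "minimal_left_ideal R N" for N
    unfolding socle_def using that by (intro Inter_greatest) auto
  have mineq: "N = socle R" if N: "minimal_left_ideal R N" for N
  proof -
    have "card N = card (socle R)" using minimal_card[OF fin M uniq N] q by simp
    then show ?thesis using minle[OF N] finsoc by (simp add: card_subset_eq)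
  qed
  have "carrier R \<noteq> {\<zero>}"
  proof
    assume c: "carrier R = {\<zero>}"
    have MI: "left_ideal R M" "M \<noteq> carrier R" using M unfolding maximal_left_ideal_def by auto
    have "M \<subseteq> carrier R" "\<zero> \<in> M" using left_idealD(1,2)[OF MI(1)] by auto
    note this MI(2)
    then show False using c by auto
  qed
  then obtain N0 where N0: "minimal_left_ideal R N0" using exists_minimal[OF fin carrier_ideal] by blast
  show smin: "minimal_left_ideal R (socle R)" using N0 mineq[OF N0] by simp
  show "\<And>N. minimal_left_ideal R N \<Longrightarrow> N = socle R" by (rule mineq)
  have sI: "left_ideal R (socle R)" and s0: "socle R \<noteq> {\<zero>}"
    and smin': "\<And>L. left_ideal R L \<Longrightarrow> L \<subseteq> socle R \<Longrightarrow> L = {\<zero>} \<or> L = socle R"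
    using smin unfolding minimal_left_ideal_def by auto
  show "left_ideal R (socle R)" "socle R \<subseteq> carrier R" "\<zero> \<in> socle R"
    using sI socsub left_idealD(2)[OF sI] by auto
  show "socle R \<subseteq> left_principal R x" if x: "x \<in> carrier R" "x \<noteq> \<zero>" for x
  proof -
    have "left_principal R x \<noteq> {\<zero>}" using lp_self[OF x(1)] x(2) by blast
    then obtain N where "minimal_left_ideal R N" "N \<subseteq> left_principal R x"
      using exists_minimal[OF fin lp_ideal[OF x(1)]] by blast
    then show ?thesis using mineq by blast
  qed
  show "left_principal R x = socle R" if x: "x \<in> socle R" "x \<noteq> \<zero>" for x
  proof -
    have xc: "x \<in> carrier R" using x socsub by blast
    have "left_principal R x \<noteq> {\<zero>}" using lp_self[OF xc] x(2) by blast
    then show ?thesis using smin' lp_ideal[OF xc] lp_le[OF sI x(1)] by blast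
  qed
  obtain y where "y \<in> socle R" "y \<noteq> \<zero>" using s0 left_idealD(2)[OF sI] by blast
  then have "{\<zero>, y} \<subseteq> socle R" using left_idealD(2)[OF sI] by blast
  then have "card {\<zero>, y} \<le> card (socle R)" using finsoc by (rule card_mono[rotated])
  then show "card (socle R) \<ge> 2" using \<open>y \<noteq> \<zero>\<close> by simp
qed

end

lemma prod_ring_simps:
  "carrier (prod_ring I S) = PiE I (\<lambda>k. carrier (S k))"
  "x \<otimes>\<^bsub>prod_ring I S\<^esub> y = (\<lambda>k\<in>I. x k \<otimes>\<^bsub>S k\<^esub> y k)"
  "x \<oplus>\<^bsub>prod_ring I S\<^esub> y = (\<lambda>k\<in>I. x k \<oplus>\<^bsub>S k\<^esub> y k)"
  "\<one>\<^bsub>prod_ring I S\<^esub> = (\<lambda>k\<in>I. \<one>\<^bsub>S k\<^esub>)"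
  "\<zero>\<^bsub>prod_ring I S\<^esub> = (\<lambda>k\<in>I. \<zero>\<^bsub>S k\<^esub>)"
  by (simp_all add: prod_ring_def)

lemma PiE_fun_eq: "x \<in> PiE I A \<Longrightarrow> y \<in> PiE I B \<Longrightarrow> (\<And>k. k \<in> I \<Longrightarrow> x k = y k) \<Longrightarrow> x = y"
  by (rule extensionalityI[of x I y]) (auto simp: PiE_iff)

lemma prod_ring_ring:
  assumes R: "\<And>k. k \<in> I \<Longrightarrow> ring (S k)"
  shows "ring (prod_ring I S)"
proof -
  note rs = ring.ring_simprules[OF R] monoid.r_one[OF ring.is_monoid[OF R]] monoid.l_one[OF ring.is_monoid[OF R]]
  note ps = prod_ring_simps
  show ?thesis
  proof (rule ringI)
    show "abelian_group (prod_ring I S)"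
    proof (rule abelian_groupI, goal_cases)
      case (1 x y) then show ?case by (auto simp: ps PiE_iff rs)
    next
      case 2 then show ?case by (auto simp: ps PiE_iff rs)
    next
      case (3 x y z) then show ?case by (intro PiE_fun_eq[of _ I "\<lambda>k. carrier (S k)"]) (auto simp: ps PiE_iff rs)
    next
      case (4 x y) then show ?case by (intro PiE_fun_eq[of _ I "\<lambda>k. carrier (S k)"]) (auto simp: ps PiE_iff rs)
    next
      case (5 x) then show ?case by (intro PiE_fun_eq[of _ I "\<lambda>k. carrier (S k)"]) (auto simp: ps PiE_iff rs)
    next
      case (6 x)
      show ?case
      proof (rule bexI[of _ "\<lambda>k\<in>I. \<ominus>\<^bsub>S k\<^esub> x k"])
        show "(\<lambda>k\<in>I. \<ominus>\<^bsub>S k\<^esub> x k) \<in> carrier (prod_ring I S)" using 6 by (auto simp: ps PiE_iff rs)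
        show "(\<lambda>k\<in>I. \<ominus>\<^bsub>S k\<^esub> x k) \<oplus>\<^bsub>prod_ring I S\<^esub> x = \<zero>\<^bsub>prod_ring I S\<^esub>"
          using 6 by (intro PiE_fun_eq[of _ I "\<lambda>k. carrier (S k)"]) (auto simp: ps PiE_iff rs)
      qed
    qed
    show "monoid (prod_ring I S)"
    proof (rule monoidI, goal_cases)
      case (1 x y) then show ?case by (auto simp: ps PiE_iff rs)
    next
      case 2 then show ?case by (auto simp: ps PiE_iff rs)
    next
      case (3 x y z) then show ?case by (intro PiE_fun_eq[of _ I "\<lambda>k. carrier (S k)"]) (auto simp: ps PiE_iff rs)
    next
      case (4 x) then show ?case by (intro PiE_fun_eq[of _ I "\<lambda>k. carrier (S k)"]) (auto simp: ps PiE_iff rs)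
    next
      case (5 x) then show ?case by (intro PiE_fun_eq[of _ I "\<lambda>k. carrier (S k)"]) (auto simp: ps PiE_iff rs)
    qed
  next
    fix x y z assume "x \<in> carrier (prod_ring I S)" "y \<in> carrier (prod_ring I S)" "z \<in> carrier (prod_ring I S)"
    then show "(x \<oplus>\<^bsub>prod_ring I S\<^esub> y) \<otimes>\<^bsub>prod_ring I S\<^esub> z = x \<otimes>\<^bsub>prod_ring I S\<^esub> z \<oplus>\<^bsub>prod_ring I S\<^esub> y \<otimes>\<^bsub>prod_ring I S\<^esub> z"
      "z \<otimes>\<^bsub>prod_ring I S\<^esub> (x \<oplus>\<^bsub>prod_ring I S\<^esub> y) = z \<otimes>\<^bsub>prod_ring I S\<^esub> x \<oplus>\<^bsub>prod_ring I S\<^esub> z \<otimes>\<^bsub>prod_ring I S\<^esub> y"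
      by (auto intro!: PiE_fun_eq[of _ I "\<lambda>k. carrier (S k)"] simp: ps PiE_iff rs)
  qed
qed

locale setting =
  fixes I :: "'i set" and S :: "'i \<Rightarrow> 'a ring"
  assumes finI: "finite I"
    and Sring: "\<And>k. k \<in> I \<Longrightarrow> ring (S k)"
    and finS: "\<And>k. k \<in> I \<Longrightarrow> finite (carrier (S k))"
    and locS: "\<And>k. k \<in> I \<Longrightarrow> \<exists>!M. maximal_left_ideal (S k) M"
    and qS: "\<And>k. k \<in> I \<Longrightarrow> quot_card (S k) (jac_rad (S k)) = card (socle (S k))"
begin

abbreviation "PR \<equiv> prod_ring I S"
abbreviation "soc k \<equiv> socle (S k)"
definition "T = PiE I soc"

lemma PRring: "ring PR" using prod_ring_ring Sring by blast

lemma finPR: "finite (carrier PR)"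
  by (simp add: prod_ring_simps finite_PiE finI finS)

lemmas ps = prod_ring_simps

lemma ls:
  assumes "k \<in> I"
  shows "minimal_left_ideal (S k) (soc k)"
    and "\<And>N. minimal_left_ideal (S k) N \<Longrightarrow> N = soc k"
    and "\<And>x. x \<in> carrier (S k) \<Longrightarrow> x \<noteq> \<zero>\<^bsub>S k\<^esub> \<Longrightarrow> soc k \<subseteq> left_principal (S k) x"
    and "\<And>x. x \<in> soc k \<Longrightarrow> x \<noteq> \<zero>\<^bsub>S k\<^esub> \<Longrightarrow> left_principal (S k) x = soc k"
    and "card (soc k) \<ge> 2"
    and "soc k \<subseteq> carrier (S k)" "\<zero>\<^bsub>S k\<^esub> \<in> soc k" "left_ideal (S k) (soc k)"
proof -
  note L = ring.local_soc[OF Sring[OF assms] finS[OF assms] locS[OF assms] qS[OF assms]]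
  show "minimal_left_ideal (S k) (soc k)" by (rule L(1))
  show "\<And>N. minimal_left_ideal (S k) N \<Longrightarrow> N = soc k" by (rule L(2))
  show "\<And>x. x \<in> carrier (S k) \<Longrightarrow> x \<noteq> \<zero>\<^bsub>S k\<^esub> \<Longrightarrow> soc k \<subseteq> left_principal (S k) x" by (rule L(3))
  show "\<And>x. x \<in> soc k \<Longrightarrow> x \<noteq> \<zero>\<^bsub>S k\<^esub> \<Longrightarrow> left_principal (S k) x = soc k" by (rule L(4))
  show "card (soc k) \<ge> 2" by (rule L(5))
  show "soc k \<subseteq> carrier (S k)" "\<zero>\<^bsub>S k\<^esub> \<in> soc k" "left_ideal (S k) (soc k)" by (rule L(6), rule L(7), rule L(8))
qed

lemma lp_prod:
  assumes x: "x \<in> carrier PR"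
  shows "left_principal PR x = PiE I (\<lambda>k. left_principal (S k) (x k))"
proof
  show "left_principal PR x \<subseteq> PiE I (\<lambda>k. left_principal (S k) (x k))"
    using x by (auto simp: left_principal_def ps PiE_iff)
  show "PiE I (\<lambda>k. left_principal (S k) (x k)) \<subseteq> left_principal PR x"
  proof
    fix y assume y: "y \<in> PiE I (\<lambda>k. left_principal (S k) (x k))"
    have ex: "\<exists>r. r \<in> carrier (S k) \<and> y k = r \<otimes>\<^bsub>S k\<^esub> x k" if "k \<in> I" for k
      using y that by (auto simp: left_principal_def PiE_iff)
    define r where "r = (\<lambda>k\<in>I. SOME r. r \<in> carrier (S k) \<and> y k = r \<otimes>\<^bsub>S k\<^esub> x k)"
    have r: "r k \<in> carrier (S k) \<and> y k = r k \<otimes>\<^bsub>S k\<^esub> x k" if "k \<in> I" for k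
      unfolding r_def using someI_ex[OF ex[OF that]] that by simp
    have rc: "r \<in> carrier PR" using r by (auto simp: ps PiE_iff r_def)
    have "y = r \<otimes>\<^bsub>PR\<^esub> x"
      by (rule PiE_fun_eq[OF y, of _ "\<lambda>k. carrier (S k)"]) (use r x in \<open>auto simp: ps PiE_iff ring.ring_simprules[OF Sring]\<close>)
    then show "y \<in> left_principal PR x" unfolding left_principal_def using rc by blast
  qed
qed

lemma prod_a_inv:
  assumes x: "x \<in> carrier PR"
  shows "\<ominus>\<^bsub>PR\<^esub> x = (\<lambda>k\<in>I. \<ominus>\<^bsub>S k\<^esub> x k)"
proof -
  have c: "(\<lambda>k\<in>I. \<ominus>\<^bsub>S k\<^esub> x k) \<in> carrier PR"
    using x by (auto simp: ps PiE_iff ring.ring_simprules[OF Sring])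
  have "(\<lambda>k\<in>I. \<ominus>\<^bsub>S k\<^esub> x k) \<oplus>\<^bsub>PR\<^esub> x = \<zero>\<^bsub>PR\<^esub>"
    using x by (intro PiE_fun_eq[of _ I "\<lambda>k. carrier (S k)"]) (auto simp: ps PiE_iff ring.ring_simprules[OF Sring])
  then show ?thesis using abelian_group.minus_equality[OF ring.is_abelian_group[OF PRring] _ x c] by simp
qed

lemma zero_ideal: "ring A \<Longrightarrow> left_ideal A {\<zero>\<^bsub>A\<^esub>}"
  by (rule ring.left_idealI) (auto simp: ring.ring_simprules)

lemma PiE_ideal:
  assumes A: "\<And>k. k \<in> I \<Longrightarrow> left_ideal (S k) (A k)"
  shows "left_ideal PR (PiE I A)"
proof (rule ring.left_idealI[OF PRring])
  note D = left_idealD[OF A]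
  show "PiE I A \<subseteq> carrier PR" using D(1) by (auto simp: ps PiE_iff)
  show "\<zero>\<^bsub>PR\<^esub> \<in> PiE I A" using D(2) by (auto simp: ps PiE_iff)
  fix a b assume "a \<in> PiE I A" "b \<in> PiE I A"
  then show "a \<oplus>\<^bsub>PR\<^esub> b \<in> PiE I A" using D(3) by (auto simp: ps PiE_iff)
next
  note D = left_idealD[OF A]
  fix a assume a: "a \<in> PiE I A"
  then have "a \<in> carrier PR" using D(1) by (auto simp: ps PiE_iff)
  then show "\<ominus>\<^bsub>PR\<^esub> a \<in> PiE I A" using a D(4) by (auto simp: prod_a_inv PiE_iff)
next
  note D = left_idealD[OF A]
  fix r a assume "r \<in> carrier PR" "a \<in> PiE I A"
  then show "r \<otimes>\<^bsub>PR\<^esub> a \<in> PiE I A" using D(5) by (auto simp: ps PiE_iff)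
qed

end

context setting begin

definition "Lk k = PiE I (\<lambda>j. if j = k then soc k else {\<zero>\<^bsub>S j\<^esub>})"

lemma T_ideal: "left_ideal PR T"
  unfolding T_def by (rule PiE_ideal) (rule ls(8))

lemma Lk_ideal: "k \<in> I \<Longrightarrow> left_ideal PR (Lk k)"
  unfolding Lk_def by (rule PiE_ideal) (auto intro: ls(8) zero_ideal Sring)

lemma soc_nonzero: assumes "k \<in> I" shows "\<exists>s\<in>soc k. s \<noteq> \<zero>\<^bsub>S k\<^esub>"
proof (rule ccontr)
  assume "\<not> ?thesis"
  then have "soc k \<subseteq> {\<zero>\<^bsub>S k\<^esub>}" by blast
  then have "card (soc k) \<le> 1" using card_mono[of "{\<zero>\<^bsub>S k\<^esub>}" "soc k"] by simp
  then show False using ls(5)[OF assms] by simp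
qed

lemma ne_zero_PR:
  assumes "y \<in> carrier PR" "y \<noteq> \<zero>\<^bsub>PR\<^esub>" shows "\<exists>j\<in>I. y j \<noteq> \<zero>\<^bsub>S j\<^esub>"
proof (rule ccontr)
  assume "\<not> ?thesis"
  then have "y = \<zero>\<^bsub>PR\<^esub>"
    by (intro PiE_fun_eq[of y I "\<lambda>k. carrier (S k)" _ "\<lambda>k. carrier (S k)"]) (use assms in \<open>auto simp: ps PiE_iff ring.ring_simprules[OF Sring]\<close>)
  then show False using assms by simp
qed

lemma lp_PR_sub: "x \<in> carrier PR \<Longrightarrow> left_principal PR x \<subseteq> carrier PR"
  using ring.lp_subset[OF PRring] .

lemma Lk_minimal: assumes k: "k \<in> I" shows "minimal_left_ideal PR (Lk k)"
  unfolding minimal_left_ideal_def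
proof (intro conjI allI impI)
  show LI: "left_ideal PR (Lk k)" by (rule Lk_ideal[OF k])
  obtain s where s: "s \<in> soc k" "s \<noteq> \<zero>\<^bsub>S k\<^esub>" using soc_nonzero[OF k] by blast
  define e where "e = (\<lambda>j\<in>I. if j = k then s else \<zero>\<^bsub>S j\<^esub>)"
  have "e \<in> Lk k" unfolding e_def Lk_def using s by auto
  moreover have "e \<noteq> \<zero>\<^bsub>PR\<^esub>"
  proof
    assume "e = \<zero>\<^bsub>PR\<^esub>"
    then have "e k = \<zero>\<^bsub>PR\<^esub> k" by simp
    then show False using s k by (simp add: e_def ps)
  qed
  ultimately show "Lk k \<noteq> {\<zero>\<^bsub>PR\<^esub>}" by blast
  fix L assume L: "left_ideal PR L \<and> L \<subseteq> Lk k"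
  show "L = {\<zero>\<^bsub>PR\<^esub>} \<or> L = Lk k"
  proof (cases "L = {\<zero>\<^bsub>PR\<^esub>}")
    case False
    have "\<zero>\<^bsub>PR\<^esub> \<in> L" using left_idealD(2) L by blast
    then obtain y where y: "y \<in> L" "y \<noteq> \<zero>\<^bsub>PR\<^esub>" using False by blast
    have yLk: "y \<in> Lk k" using y L by blast
    have yc: "y \<in> carrier PR" using yLk left_idealD(1)[OF LI] by blast
    obtain j where j: "j \<in> I" "y j \<noteq> \<zero>\<^bsub>S j\<^esub>" using ne_zero_PR[OF yc y(2)] by blast
    have yj: "\<And>i. i \<in> I \<Longrightarrow> i \<noteq> k \<Longrightarrow> y i = \<zero>\<^bsub>S i\<^esub>" and yk: "y k \<in> soc k"
      using yLk k unfolding Lk_def by (auto simp: PiE_iff)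
    have jk: "j = k" using yj j by blast
    have "left_principal PR y = PiE I (\<lambda>i. left_principal (S i) (y i))" by (rule lp_prod[OF yc])
    also have "\<dots> = Lk k" unfolding Lk_def
    proof (rule PiE_cong)
      fix i assume i: "i \<in> I"
      show "left_principal (S i) (y i) = (if i = k then soc k else {\<zero>\<^bsub>S i\<^esub>})"
      proof (cases "i = k")
        case True then show ?thesis using ls(4)[OF k yk] j jk by simp
      next
        case False then show ?thesis using yj[OF i False] ring.lp_zero[OF Sring[OF i]] by simp
      qed
    qed
    finally have "Lk k \<subseteq> L" using ring.lp_le[OF PRring, of L y] L y(1) by blast
    then show ?thesis using L by blast
  qed simp
qed

lemma minimal_sub_T:
  assumes N: "minimal_left_ideal PR N" shows "N \<subseteq> T"
proof
  have NI: "left_ideal PR N" and Nmin: "\<And>L. left_ideal PR L \<Longrightarrow> L \<subseteq> N \<Longrightarrow> L = {\<zero>\<^bsub>PR\<^esub>} \<or> L = N"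
    using N unfolding minimal_left_ideal_def by auto
  fix x assume xN: "x \<in> N"
  have xc: "x \<in> carrier PR" using xN left_idealD(1)[OF NI] by blast
  have "x k \<in> soc k" if k: "k \<in> I" for k
  proof (cases "x k = \<zero>\<^bsub>S k\<^esub>")
    case True then show ?thesis using ls(7)[OF k] by simp
  next
    case False
    have xk: "x k \<in> carrier (S k)" using xc k by (auto simp: ps PiE_iff)
    have "Lk k \<subseteq> PiE I (\<lambda>i. left_principal (S i) (x i))"
      unfolding Lk_def
    proof (rule PiE_mono)
      fix i assume i: "i \<in> I"
      have xi: "x i \<in> carrier (S i)" using xc i by (auto simp: ps PiE_iff)
      show "(if i = k then soc k else {\<zero>\<^bsub>S i\<^esub>}) \<subseteq> left_principal (S i) (x i)"
        using ls(3)[OF k xk False] left_idealD(2)[OF ring.lp_ideal[OF Sring[OF i] xi]] by auto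
    qed
    also have "\<dots> = left_principal PR x" using lp_prod[OF xc] by simp
    also have "\<dots> \<subseteq> N" using ring.lp_le[OF PRring NI xN] .
    finally have "Lk k = N" using Nmin Lk_minimal[OF k] unfolding minimal_left_ideal_def by blast
    then have "x \<in> Lk k" using xN by simp
    from PiE_mem[OF this[unfolded Lk_def] k] show ?thesis by simp
  qed
  then show "x \<in> T" unfolding T_def using xc by (auto simp: ps PiE_iff)
qed

lemma socle_PR: "socle PR = T"
proof
  show "socle PR \<subseteq> T" unfolding socle_def using T_ideal minimal_sub_T by (intro Inter_lower) blast
  show "T \<subseteq> socle PR" unfolding socle_def
  proof (rule Inter_greatest)
    fix L assume "L \<in> {L. left_ideal PR L \<and> (\<forall>N. minimal_left_ideal PR N \<longrightarrow> N \<subseteq> L)}"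
    then have LI: "left_ideal PR L" and LN: "\<And>k. k \<in> I \<Longrightarrow> Lk k \<subseteq> L" using Lk_minimal by auto
    show "T \<subseteq> L"
    proof
      fix t assume t: "t \<in> T"
      have "(\<lambda>j\<in>I. if j \<in> F then t j else \<zero>\<^bsub>S j\<^esub>) \<in> L" if "F \<subseteq> I" for F
        using finite_subset[OF that finI] that
      proof (induction F rule: finite_subset_induct')
        case empty
        then show ?case using left_idealD(2)[OF LI] by (simp add: ps restrict_def)
      next
        case (insert a F)
        define e where "e = (\<lambda>j\<in>I. if j = a then t j else \<zero>\<^bsub>S j\<^esub>)"
        have "e \<in> Lk a" unfolding e_def Lk_def using t insert(2) by (auto simp: T_def PiE_iff)
        then have eL: "e \<in> L" using LN insert(2) by blast
        have "(\<lambda>j\<in>I. if j \<in> insert a F then t j else \<zero>\<^bsub>S j\<^esub>) =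
              (\<lambda>j\<in>I. if j \<in> F then t j else \<zero>\<^bsub>S j\<^esub>) \<oplus>\<^bsub>PR\<^esub> e"
        proof (rule ext)
          fix j show "(\<lambda>j\<in>I. if j \<in> insert a F then t j else \<zero>\<^bsub>S j\<^esub>) j =
              ((\<lambda>j\<in>I. if j \<in> F then t j else \<zero>\<^bsub>S j\<^esub>) \<oplus>\<^bsub>PR\<^esub> e) j"
          proof (cases "j \<in> I")
            case True
            have tj: "t j \<in> carrier (S j)" using t True ls(6)[OF True] by (auto simp: T_def PiE_iff)
            show ?thesis using True tj insert(4) by (auto simp: ps e_def ring.ring_simprules[OF Sring])
          qed (simp add: ps)
        qed
        then show ?case using left_idealD(3)[OF LI insert(5) eL] by (simp only:)
      qed
      from this[of I] have "(\<lambda>j\<in>I. if j \<in> I then t j else \<zero>\<^bsub>S j\<^esub>) \<in> L" by simp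
      moreover have "(\<lambda>j\<in>I. if j \<in> I then t j else \<zero>\<^bsub>S j\<^esub>) = t"
        using t unfolding T_def by (auto simp: PiE_iff fun_eq_iff extensional_def)
      ultimately show "t \<in> L" by simp
    qed
  qed
qed

end

context setting begin

definition "q k = card (soc k)"
definition "h k v = (if v = \<zero>\<^bsub>S k\<^esub> then 1 else - 1 / (of_nat (q k) - 1) :: rat)"
definition "f x = (if x \<in> T then 1 - (\<Prod>k\<in>I. h k (x k)) else (1::rat))"

lemma finsoc: "k \<in> I \<Longrightarrow> finite (soc k)"
  using finite_subset[OF ls(6) finS] by blast

lemma sum_h: assumes k: "k \<in> I" shows "(\<Sum>v\<in>soc k. h k v) = 0"
proof -
  have q2: "q k \<ge> 2" using ls(5)[OF k] unfolding q_def by simp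
  have fin: "finite (soc k - {\<zero>\<^bsub>S k\<^esub>})" using finsoc[OF k] by blast
  have "soc k = insert (\<zero>\<^bsub>S k\<^esub>) (soc k - {\<zero>\<^bsub>S k\<^esub>})" using ls(7)[OF k] by blast
  then have "(\<Sum>v\<in>soc k. h k v) = h k (\<zero>\<^bsub>S k\<^esub>) + (\<Sum>v\<in>soc k - {\<zero>\<^bsub>S k\<^esub>}. h k v)"
    using fin by (metis Diff_iff insertCI sum.insert)
  also have "(\<Sum>v\<in>soc k - {\<zero>\<^bsub>S k\<^esub>}. h k v) = (\<Sum>v\<in>soc k - {\<zero>\<^bsub>S k\<^esub>}. - 1 / (of_nat (q k) - 1))"
    by (rule sum.cong) (auto simp: h_def)
  also have "\<dots> = of_nat (q k - 1) * (- 1 / (of_nat (q k) - 1))"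
    using ls(7)[OF k] finsoc[OF k] by (simp add: card_Diff_singleton q_def)
  also have "of_nat (q k - 1) = (of_nat (q k) - 1 :: rat)" using q2 by (simp add: of_nat_diff)
  finally show ?thesis using q2 by (simp add: h_def)
qed

lemma sum_f:
  assumes x: "x \<in> carrier PR" and x0: "x \<noteq> \<zero>\<^bsub>PR\<^esub>"
  shows "(\<Sum>y\<in>left_principal PR x. f y) = of_nat (card (left_principal PR x))"
proof -
  define A where "A k = left_principal (S k) (x k)" for k
  have lpx: "left_principal PR x = PiE I A" unfolding A_def by (rule lp_prod[OF x])
  have finlp: "finite (left_principal PR x)" using finite_subset[OF lp_PR_sub[OF x] finPR] .
  define g where "g y = (\<Prod>k\<in>I. h k (y k))" for y
  have fy: "f y = 1 - (if y \<in> T then g y else 0)" for y unfolding f_def g_def by simp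
  have "(\<Sum>y\<in>left_principal PR x. f y) = of_nat (card (left_principal PR x)) - (\<Sum>y\<in>left_principal PR x. (if y \<in> T then g y else 0))"
    unfolding fy by (simp add: sum_subtractf)
  also have "(\<Sum>y\<in>left_principal PR x. (if y \<in> T then g y else 0)) = (\<Sum>y\<in>left_principal PR x \<inter> T. g y)"
    using finlp by (simp add: sum.inter_restrict)
  also have "left_principal PR x \<inter> T = PiE I (\<lambda>k. A k \<inter> soc k)"
    unfolding lpx T_def by (rule PiE_Int)
  also have "(\<Sum>y\<in>PiE I (\<lambda>k. A k \<inter> soc k). g y) = (\<Prod>k\<in>I. \<Sum>v\<in>A k \<inter> soc k. h k v)"
    unfolding g_def by (rule prod_sum_PiE[symmetric]) (use finI finsoc in auto)
  also have "\<dots> = 0"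
  proof -
    obtain k where k: "k \<in> I" "x k \<noteq> \<zero>\<^bsub>S k\<^esub>" using ne_zero_PR[OF x x0] by blast
    have xk: "x k \<in> carrier (S k)" using x k by (auto simp: ps PiE_iff)
    have "A k \<inter> soc k = soc k" using ls(3)[OF k(1) xk k(2)] unfolding A_def by blast
    then have "(\<Sum>v\<in>A k \<inter> soc k. h k v) = 0" using sum_h[OF k(1)] by simp
    then show ?thesis using k(1) finI by (intro prod_zero) auto
  qed
  finally show ?thesis by simp
qed

lemma lp_mono: "x \<in> carrier PR \<Longrightarrow> y \<in> left_principal PR x \<Longrightarrow> left_principal PR y \<subseteq> left_principal PR x"
  using ring.lp_le[OF PRring ring.lp_ideal[OF PRring]] by blast

lemma f_inv:
  assumes x: "x \<in> carrier PR" and y: "y \<in> carrier PR" and eq: "left_principal PR x = left_principal PR y"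
  shows "f x = f y"
proof -
  have yx: "y \<in> left_principal PR x" using eq ring.lp_self[OF PRring y] by simp
  have xy: "x \<in> left_principal PR y" using eq ring.lp_self[OF PRring x] by simp
  have T: "x \<in> T \<longleftrightarrow> y \<in> T"
  proof
    assume "x \<in> T"
    then have "left_principal PR x \<subseteq> T" by (rule ring.lp_le[OF PRring T_ideal])
    then show "y \<in> T" using yx by (rule subsetD)
  next
    assume "y \<in> T"
    then have "left_principal PR y \<subseteq> T" by (rule ring.lp_le[OF PRring T_ideal])
    then show "x \<in> T" using xy by (rule subsetD)
  qed
  have ne: "left_principal (S k) (z k) \<noteq> {}" if "z \<in> carrier PR" "k \<in> I" for z k
    using ring.lp_self[OF Sring[OF that(2)], of "z k"] that by (auto simp: ps PiE_iff)
  have "PiE I (\<lambda>k. left_principal (S k) (x k)) = PiE I (\<lambda>k. left_principal (S k) (y k))"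
    using eq lp_prod[OF x] lp_prod[OF y] by simp
  then have lpk: "left_principal (S k) (x k) = left_principal (S k) (y k)" if "k \<in> I" for k
    using PiE_eq_iff_not_empty[of I "\<lambda>k. left_principal (S k) (x k)" "\<lambda>k. left_principal (S k) (y k)"]
      ne[OF x] ne[OF y] that by blast
  have "h k (x k) = h k (y k)" if k: "k \<in> I" for k
  proof -
    have xk: "x k \<in> carrier (S k)" and yk: "y k \<in> carrier (S k)" using x y k by (auto simp: ps PiE_iff)
    have "x k = \<zero>\<^bsub>S k\<^esub> \<longleftrightarrow> y k = \<zero>\<^bsub>S k\<^esub>"
      using lpk[OF k] ring.lp_zero[OF Sring[OF k]] ring.lp_eq_zero[OF Sring[OF k]] xk yk by metis
    then show ?thesis unfolding h_def by simp
  qed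
  then show ?thesis unfolding f_def using T by (simp cong: prod.cong)
qed

lemma weight:
  assumes hw: "normalized_hom_weight PR \<omega>"
  shows "x \<in> carrier PR \<Longrightarrow> \<omega> x = f x"
proof (induction "card (left_principal PR x)" arbitrary: x rule: less_induct)
  case (less x)
  have w0: "\<omega> \<zero>\<^bsub>PR\<^esub> = 0"
    and wc: "\<And>x y. x \<in> carrier PR \<Longrightarrow> y \<in> carrier PR \<Longrightarrow> left_principal PR x = left_principal PR y \<Longrightarrow> \<omega> x = \<omega> y"
    and ws: "\<And>x. x \<in> carrier PR \<Longrightarrow> x \<noteq> \<zero>\<^bsub>PR\<^esub> \<Longrightarrow> (\<Sum>y\<in>left_principal PR x. \<omega> y) = of_nat (card (left_principal PR x))"
    using hw unfolding normalized_hom_weight_def by blast+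
  show ?case
  proof (cases "x = \<zero>\<^bsub>PR\<^esub>")
    case True
    have "\<zero>\<^bsub>PR\<^esub> \<in> T" using left_idealD(2)[OF T_ideal] .
    moreover have "(\<Prod>k\<in>I. h k (\<zero>\<^bsub>PR\<^esub> k)) = 1" by (simp add: ps h_def)
    ultimately show ?thesis using True w0 by (simp add: f_def)
  next
    case False
    define L where "L = left_principal PR x"
    have finL: "finite L" unfolding L_def using finite_subset[OF lp_PR_sub[OF less(2)] finPR] .
    define E where "E = {y \<in> L. left_principal PR y = L}"
    have Lc: "L \<subseteq> carrier PR" unfolding L_def using lp_PR_sub[OF less(2)] .
    have finE: "finite E" using finL unfolding E_def by simp
    have xE: "x \<in> E" unfolding E_def L_def using ring.lp_self[OF PRring less(2)] by simp
    have rest: "\<omega> y = f y" if y: "y \<in> L - E" for y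
    proof -
      have yc: "y \<in> carrier PR" using y Lc by blast
      have "left_principal PR y \<subseteq> L" using lp_mono[OF less(2)] y unfolding L_def by blast
      moreover have "left_principal PR y \<noteq> L" using y unfolding E_def by blast
      ultimately have "card (left_principal PR y) < card L" using finL by (simp add: psubset_card_mono)
      then show ?thesis using less(1)[OF _ yc] unfolding L_def by blast
    qed
    have onE: "\<omega> y = \<omega> x \<and> f y = f x" if y: "y \<in> E" for y
    proof -
      have yc: "y \<in> carrier PR" using y Lc unfolding E_def by blast
      have "left_principal PR y = left_principal PR x" using y unfolding E_def L_def by blast
      then show ?thesis using wc[OF yc less(2)] f_inv[OF yc less(2)] by simp
    qed
    have EL: "E \<subseteq> L" unfolding E_def by blast
    have split: "(\<Sum>y\<in>L. u y) = (\<Sum>y\<in>E. u y) + (\<Sum>y\<in>L - E. u y)" for u :: "_ \<Rightarrow> rat"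
      using sum.subset_diff[OF EL finL] by (simp add: add.commute)
    have "(\<Sum>y\<in>L. \<omega> y) = (\<Sum>y\<in>L. f y)"
      using ws[OF less(2) False] sum_f[OF less(2) False] unfolding L_def by simp
    then have "(\<Sum>y\<in>E. \<omega> y) = (\<Sum>y\<in>E. f y)"
    proof -
      have "(\<Sum>y\<in>L - E. \<omega> y) = (\<Sum>y\<in>L - E. f y)" using rest by (rule sum.cong[OF refl])
      then show ?thesis using \<open>(\<Sum>y\<in>L. \<omega> y) = (\<Sum>y\<in>L. f y)\<close> split[of \<omega>] split[of f] by simp
    qed
    then have "of_nat (card E) * \<omega> x = of_nat (card E) * f x"
      using onE by (simp cong: sum.cong)
    moreover have "card E \<noteq> 0" using finE xE by auto
    ultimately show ?thesis by simp
  qed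
qed

end

context setting begin

lemma q2: "k \<in> I \<Longrightarrow> q k \<ge> 2" using ls(5) unfolding q_def by simp

lemma h_nz: "k \<in> I \<Longrightarrow> h k v \<noteq> 0"
  using q2[of k] by (auto simp: h_def)

lemma T_sub: "T \<subseteq> carrier PR" using left_idealD(1)[OF T_ideal] .

lemma f_T: "a \<in> T \<Longrightarrow> f a \<noteq> 1"
  using h_nz finI by (auto simp: f_def prod_zero_iff)

lemma f_nT: "a \<notin> T \<Longrightarrow> f a = 1" by (simp add: f_def)

lemma f_zero_iff:
  "(\<exists>a\<in>carrier PR. a \<noteq> \<zero>\<^bsub>PR\<^esub> \<and> f a = 0) \<longleftrightarrow> (\<exists>k\<in>I. \<exists>l\<in>I. k \<noteq> l \<and> q k = 2 \<and> q l = 2)"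
proof
  assume "\<exists>a\<in>carrier PR. a \<noteq> \<zero>\<^bsub>PR\<^esub> \<and> f a = 0"
  then obtain a where a: "a \<in> carrier PR" "a \<noteq> \<zero>\<^bsub>PR\<^esub>" "f a = 0" by blast
  have aT: "a \<in> T" using a(3) f_nT by force
  define K where "K = {k \<in> I. a k \<noteq> \<zero>\<^bsub>S k\<^esub>}"
  have KI: "K \<subseteq> I" and finK: "finite K" using finI unfolding K_def by auto
  have "(\<Prod>k\<in>I. h k (a k)) = (\<Prod>k\<in>K. - 1 / (of_nat (q k) - 1))"
    by (rule prod.mono_neutral_cong_right[OF finI KI]) (auto simp: K_def h_def)
  also have "\<dots> = (\<Prod>k\<in>K. - 1) / (\<Prod>k\<in>K. (of_nat (q k) - 1 :: rat))"
    by (rule prod_dividef)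
  also have "(\<Prod>k\<in>K. (of_nat (q k) - 1 :: rat)) = of_nat (\<Prod>k\<in>K. (q k - 1))"
    unfolding of_nat_prod
  proof (rule prod.cong[OF refl])
    fix k assume "k \<in> K" then have "q k \<ge> 2" using q2 KI by blast
    then show "(of_nat (q k) - 1 :: rat) = of_nat (q k - 1)" by (simp add: of_nat_diff)
  qed
  finally have "(\<Prod>k\<in>I. h k (a k)) = (- 1) ^ card K / of_nat (\<Prod>k\<in>K. (q k - 1))" by simp
  moreover have "(\<Prod>k\<in>I. h k (a k)) = 1" using a(3) aT unfolding f_def by simp
  moreover have P0: "(\<Prod>k\<in>K. (q k - 1)) > 0" using q2 KI
    by (intro prod_pos) (auto simp: subset_iff, fastforce)
  ultimately have eq: "(- 1 :: rat) ^ card K = of_nat (\<Prod>k\<in>K. (q k - 1))" by (simp add: field_simps)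
  define P where "P = (\<Prod>k\<in>K. (q k - 1))"
  have eqP: "(- 1 :: rat) ^ card K = of_nat P" using eq unfolding P_def .
  have even: "even (card K)"
  proof (rule ccontr)
    assume "odd (card K)" then have "(- 1 :: rat) ^ card K = -1" by simp
    then have "(of_nat P :: rat) = -1" using eqP by simp
    then show False by simp
  qed
  then have "(of_nat P :: rat) = 1" using eqP by simp
  then have "P = 1" by simp
  then have "\<forall>k\<in>K. q k - 1 = 1" unfolding P_def using finK prod_eq_1_iff[OF finK, of "\<lambda>k. q k - 1"] by simp
  then have qK: "\<forall>k\<in>K. q k = 2" using q2 KI by force
  obtain j where j: "j \<in> I" "a j \<noteq> \<zero>\<^bsub>S j\<^esub>" using ne_zero_PR[OF a(1,2)] by blast
  then have "j \<in> K" unfolding K_def by simp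
  then have "card K \<noteq> 0" using finK by auto
  with even have "card K \<ge> 2" by presburger
  then obtain k l where "k \<in> K" "l \<in> K" "k \<noteq> l"
    by (metis One_nat_def card_le_Suc_iff numeral_2_eq_2 insertCI)
  then show "\<exists>k\<in>I. \<exists>l\<in>I. k \<noteq> l \<and> q k = 2 \<and> q l = 2" using qK KI by blast
next
  assume "\<exists>k\<in>I. \<exists>l\<in>I. k \<noteq> l \<and> q k = 2 \<and> q l = 2"
  then obtain k l where kl: "k \<in> I" "l \<in> I" "k \<noteq> l" "q k = 2" "q l = 2" by blast
  obtain sk where sk: "sk \<in> soc k" "sk \<noteq> \<zero>\<^bsub>S k\<^esub>" using soc_nonzero[OF kl(1)] by blast
  obtain sl where sl: "sl \<in> soc l" "sl \<noteq> \<zero>\<^bsub>S l\<^esub>" using soc_nonzero[OF kl(2)] by blast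
  define a where "a = (\<lambda>j\<in>I. if j = k then sk else if j = l then sl else \<zero>\<^bsub>S j\<^esub>)"
  have aT: "a \<in> T" unfolding a_def T_def using sk sl ls(7) kl by (auto simp: PiE_iff)
  have "a \<noteq> \<zero>\<^bsub>PR\<^esub>"
  proof
    assume "a = \<zero>\<^bsub>PR\<^esub>" then have "a k = \<zero>\<^bsub>PR\<^esub> k" by simp
    then show False using sk kl by (simp add: a_def ps)
  qed
  moreover have "(\<Prod>j\<in>I. h j (a j)) = (\<Prod>j\<in>{k,l}. h j (a j))"
    by (rule prod.mono_neutral_right[OF finI]) (use kl in \<open>auto simp: a_def h_def\<close>)
  moreover have "(\<Prod>j\<in>{k,l}. h j (a j)) = 1"
    using kl sk sl by (simp add: a_def h_def)
  ultimately show "\<exists>a\<in>carrier PR. a \<noteq> \<zero>\<^bsub>PR\<^esub> \<and> f a = 0"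
    using aT T_sub unfolding f_def by auto
qed

end

lemma sum_unit_eq_card:
  fixes w :: "'b \<Rightarrow> complex"
  assumes fin: "finite B" and n: "\<And>b. b \<in> B \<Longrightarrow> norm (w b) = 1"
    and s: "(\<Sum>b\<in>B. w b) = of_nat (card B)"
  shows "\<And>b. b \<in> B \<Longrightarrow> w b = 1"
proof -
  have re: "Re (w b) \<le> 1" if "b \<in> B" for b
    using complex_Re_le_cmod[of "w b"] n[OF that] by simp
  have "(\<Sum>b\<in>B. Re (w b)) = of_nat (card B)" using arg_cong[OF s, of Re] by (simp add: Re_sum)
  then have "(\<Sum>b\<in>B. 1 - Re (w b)) = 0" by (simp add: sum_subtractf)
  then have "\<forall>b\<in>B. 1 - Re (w b) = 0" using sum_nonneg_eq_0_iff[OF fin, of "\<lambda>b. 1 - Re (w b)"] re by simp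
  fix b assume b: "b \<in> B"
  then have r1: "Re (w b) = 1" using \<open>\<forall>b\<in>B. 1 - Re (w b) = 0\<close> by simp
  have "(cmod (w b))\<^sup>2 = (Re (w b))\<^sup>2 + (Im (w b))\<^sup>2" by (rule cmod_power2)
  then have "Im (w b) = 0" using n[OF b] r1 by simp
  then show "w b = 1" using r1 by (simp add: complex_eq_iff)
qed

context ring begin

lemma char_props:
  assumes fin: "finite (carrier R)" and chi: "\<chi> \<in> add_chars R"
  shows "\<chi> \<zero> = 1" and "\<And>z. z \<in> carrier R \<Longrightarrow> norm (\<chi> z) = 1"
proof -
  have nz: "\<And>x. x \<in> carrier R \<Longrightarrow> \<chi> x \<noteq> 0"
    and hom: "\<And>x y. x \<in> carrier R \<Longrightarrow> y \<in> carrier R \<Longrightarrow> \<chi> (x \<oplus> y) = \<chi> x * \<chi> y"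
    using chi unfolding add_chars_def by auto
  have "\<chi> \<zero> = \<chi> \<zero> * \<chi> \<zero>" using hom[of \<zero> \<zero>] by simp
  then show c0: "\<chi> \<zero> = 1" using nz[of \<zero>] by simp
  fix z assume z: "z \<in> carrier R"
  have bij: "bij_betw (\<lambda>y. z \<oplus> y) (carrier R) (carrier R)"
  proof (rule bij_betwI[of _ _ _ "\<lambda>y. \<ominus> z \<oplus> y"])
    show "(\<oplus>) z \<in> carrier R \<rightarrow> carrier R" using z by auto
    show "(\<lambda>y. \<ominus> z \<oplus> y) \<in> carrier R \<rightarrow> carrier R" using z by auto
    fix y assume y: "y \<in> carrier R"
    show "\<ominus> z \<oplus> (z \<oplus> y) = y" using y z by (simp add: a_assoc[symmetric] l_neg)
    show "z \<oplus> (\<ominus> z \<oplus> y) = y" using y z by (simp add: a_assoc[symmetric] r_neg)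
  qed
  have "(\<Prod>y\<in>carrier R. \<chi> (z \<oplus> y)) = (\<Prod>y\<in>carrier R. \<chi> y)"
    using prod.reindex_bij_betw[OF bij, of \<chi>] .
  moreover have "(\<Prod>y\<in>carrier R. \<chi> (z \<oplus> y)) = \<chi> z ^ card (carrier R) * (\<Prod>y\<in>carrier R. \<chi> y)"
    using z hom by (simp add: prod.distrib)
  moreover have "(\<Prod>y\<in>carrier R. \<chi> y) \<noteq> 0" using nz fin by simp
  ultimately have "\<chi> z ^ card (carrier R) = 1" by simp
  then have "norm (\<chi> z) ^ card (carrier R) = 1" by (metis norm_one norm_power)
  moreover have "card (carrier R) \<noteq> 0" using fin by auto
  ultimately show "norm (\<chi> z) = 1"
    using power_eq_imp_eq_base[of "norm (\<chi> z)" "card (carrier R)" 1] by simp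
qed

lemma zero_block:
  assumes fin: "finite (carrier R)" and gc: "generating_char R \<chi>"
  shows "{\<zero>} \<in> left_dual R \<chi> (right_dual R \<chi> P)"
proof -
  have chi: "\<chi> \<in> add_chars R" and bij: "bij_betw (\<lambda>r. \<lambda>x\<in>carrier R. \<chi> (x \<otimes> r)) (carrier R) (add_chars R)"
    using gc unfolding generating_char_def by auto
  note cp = char_props[OF fin chi]
  define Q where "Q = right_dual R \<chi> P"
  have Qcov: "\<exists>B\<in>Q. b \<in> B \<and> B \<subseteq> carrier R" if b: "b \<in> carrier R" for b
  proof
    let ?B = "{a' \<in> carrier R. \<forall>B\<in>P. (\<Sum>c\<in>B. \<chi> (b \<otimes> c)) = (\<Sum>c\<in>B. \<chi> (a' \<otimes> c))}"
    show "?B \<in> Q" unfolding Q_def right_dual_def using b by (rule imageI)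
    show "b \<in> ?B \<and> ?B \<subseteq> carrier R" using b by auto
  qed
  define X where "X = {a' \<in> carrier R. \<forall>B\<in>Q. (\<Sum>b\<in>B. \<chi> (b \<otimes> \<zero>)) = (\<Sum>b\<in>B. \<chi> (b \<otimes> a'))}"
  have "X = {\<zero>}"
  proof
    show "{\<zero>} \<subseteq> X" unfolding X_def by auto
    show "X \<subseteq> {\<zero>}"
    proof
      fix a' assume a': "a' \<in> X"
      then have a'c: "a' \<in> carrier R" unfolding X_def by blast
      have one: "\<chi> (b \<otimes> a') = 1" if b: "b \<in> carrier R" for b
      proof -
        obtain B where B: "B \<in> Q" "b \<in> B" "B \<subseteq> carrier R" using Qcov[OF b] by blast
        have finB: "finite B" using finite_subset[OF B(3) fin] .
        have "(\<Sum>b\<in>B. \<chi> (b \<otimes> \<zero>)) = of_nat (card B)"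
          using B(3) cp(1) by (simp add: subset_iff)
        then have sB: "(\<Sum>b\<in>B. \<chi> (b \<otimes> a')) = of_nat (card B)" using a' B(1) unfolding X_def by auto
        have nB: "\<And>c. c \<in> B \<Longrightarrow> norm (\<chi> (c \<otimes> a')) = 1" using cp(2) B(3) a'c by auto
        show ?thesis using sum_unit_eq_card[OF finB, of "\<lambda>c. \<chi> (c \<otimes> a')", OF nB sB B(2)] .
      qed
      have "(\<lambda>x\<in>carrier R. \<chi> (x \<otimes> a')) = (\<lambda>x\<in>carrier R. \<chi> (x \<otimes> \<zero>))"
        using one cp(1) by (auto simp: restrict_def fun_eq_iff)
      then have "a' = \<zero>" using bij_betw_imp_inj_on[OF bij] a'c unfolding inj_on_def by auto
      then show "a' \<in> {\<zero>}" by simp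
    qed
  qed
  moreover have "X \<in> left_dual R \<chi> Q" unfolding X_def left_dual_def by auto
  ultimately show ?thesis unfolding Q_def by simp
qed

end

theorem mainTheorem7:
  fixes I :: "'i set" and S :: "'i \<Rightarrow> 'a ring" and \<omega> :: "('i \<Rightarrow> 'a) \<Rightarrow> rat"
  defines "R \<equiv> prod_ring I S"
  defines "q \<equiv> (\<lambda>k. quot_card (S k) (jac_rad (S k)))"
  assumes fin: "finite I"
    and loc: "\<And>k. k \<in> I \<Longrightarrow> local_ring (S k)"
    and frob: "\<And>k. k \<in> I \<Longrightarrow> frobenius_ring (S k)"
    and socsize: "\<And>k. k \<in> I \<Longrightarrow> q k = card (socle (S k))"
    and hw: "normalized_hom_weight R \<omega>"
  shows "(\<forall>a\<in>socle R. \<omega> a \<noteq> 1)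
       \<and> (carrier R \<noteq> socle R \<longrightarrow> carrier R - socle R \<in> level_partition R \<omega>)
       \<and> ((\<exists>a\<in>carrier R. a \<noteq> \<zero>\<^bsub>R\<^esub> \<and> \<omega> a = 0) \<longleftrightarrow>
            (\<exists>k\<in>I. \<exists>l\<in>I. k \<noteq> l \<and> q k = 2 \<and> q l = 2))
       \<and> ((\<exists>a\<in>carrier R. a \<noteq> \<zero>\<^bsub>R\<^esub> \<and> \<omega> a = 0) \<longrightarrow>
            (\<forall>\<chi>. generating_char R \<chi> \<longrightarrow> \<not> reflexive_partition R \<chi> (level_partition R \<omega>)))"
  proof -
  have SR: "\<And>k. k \<in> I \<Longrightarrow> ring (S k)" using loc unfolding local_ring_def by blast
  have fS: "\<And>k. k \<in> I \<Longrightarrow> finite (carrier (S k))" using frob unfolding frobenius_ring_def by blast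
  have lS: "\<And>k. k \<in> I \<Longrightarrow> \<exists>!M. maximal_left_ideal (S k) M" using loc unfolding local_ring_def by blast
  have qS: "\<And>k. k \<in> I \<Longrightarrow> quot_card (S k) (jac_rad (S k)) = card (socle (S k))" using socsize unfolding q_def by blast
  interpret st: setting I S by (rule setting.intro[OF fin SR fS lS qS])
  have w: "\<And>x. x \<in> carrier R \<Longrightarrow> \<omega> x = st.f x" using st.weight[OF hw[unfolded R_def]] unfolding R_def by blast
  have soc: "socle R = st.T" unfolding R_def by (rule st.socle_PR)
  have Tsub: "st.T \<subseteq> carrier R" unfolding R_def by (rule st.T_sub)
  have qq: "\<And>k. k \<in> I \<Longrightarrow> q k = st.q k" using socsize unfolding st.q_def by simp
  have A: "\<forall>a\<in>socle R. \<omega> a \<noteq> 1"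
    using w Tsub st.f_T unfolding soc by auto
  have B: "carrier R \<noteq> socle R \<longrightarrow> carrier R - socle R \<in> level_partition R \<omega>"
  proof
    assume "carrier R \<noteq> socle R"
    then obtain x where x: "x \<in> carrier R" "x \<notin> st.T" using soc Tsub by blast
    have "{y \<in> carrier R. \<omega> y = \<omega> x} = carrier R - socle R"
      using w x st.f_T st.f_nT unfolding soc by auto
    then show "carrier R - socle R \<in> level_partition R \<omega>"
      unfolding level_partition_def using x(1) by (metis (no_types, lifting) image_eqI)
  qed
  have C: "(\<exists>a\<in>carrier R. a \<noteq> \<zero>\<^bsub>R\<^esub> \<and> \<omega> a = 0) \<longleftrightarrow>
            (\<exists>k\<in>I. \<exists>l\<in>I. k \<noteq> l \<and> q k = 2 \<and> q l = 2)"
  proof -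
    have "(\<exists>a\<in>carrier R. a \<noteq> \<zero>\<^bsub>R\<^esub> \<and> \<omega> a = 0) \<longleftrightarrow> (\<exists>a\<in>carrier R. a \<noteq> \<zero>\<^bsub>R\<^esub> \<and> st.f a = 0)"
      using w by auto
    also have "\<dots> \<longleftrightarrow> (\<exists>k\<in>I. \<exists>l\<in>I. k \<noteq> l \<and> st.q k = 2 \<and> st.q l = 2)"
      unfolding R_def by (rule st.f_zero_iff)
    also have "\<dots> \<longleftrightarrow> (\<exists>k\<in>I. \<exists>l\<in>I. k \<noteq> l \<and> q k = 2 \<and> q l = 2)"
      using qq by auto
    finally show ?thesis .
  qed
  have D: "(\<exists>a\<in>carrier R. a \<noteq> \<zero>\<^bsub>R\<^esub> \<and> \<omega> a = 0) \<longrightarrow>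
            (\<forall>\<chi>. generating_char R \<chi> \<longrightarrow> \<not> reflexive_partition R \<chi> (level_partition R \<omega>))"
  proof (intro impI allI notI)
    fix \<chi>
    assume ex: "\<exists>a\<in>carrier R. a \<noteq> \<zero>\<^bsub>R\<^esub> \<and> \<omega> a = 0" and gc: "generating_char R \<chi>"
      and refl: "reflexive_partition R \<chi> (level_partition R \<omega>)"
    obtain a where a: "a \<in> carrier R" "a \<noteq> \<zero>\<^bsub>R\<^esub>" "\<omega> a = 0" using ex by blast
    have rR: "ring R" unfolding R_def by (rule st.PRring)
    have finR: "finite (carrier R)" unfolding R_def by (rule st.finPR)
    have "{\<zero>\<^bsub>R\<^esub>} \<in> level_partition R \<omega>"
      using ring.zero_block[OF rR finR gc, of "level_partition R \<omega>"] refl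
      unfolding reflexive_partition_def by simp
    then obtain x where x: "x \<in> carrier R" "{y \<in> carrier R. \<omega> y = \<omega> x} = {\<zero>\<^bsub>R\<^esub>}"
      unfolding level_partition_def by blast
    then have "x = \<zero>\<^bsub>R\<^esub>" by blast
    moreover have "\<omega> \<zero>\<^bsub>R\<^esub> = 0" using hw unfolding normalized_hom_weight_def by blast
    ultimately have "a \<in> {y \<in> carrier R. \<omega> y = \<omega> x}" using a by simp
    then show False using x(2) a(2) by blast
  qed
  show ?thesis using A B C D by blast
qed


end
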